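(* Let $x_1\le x_2\le\cdots$ be a sequence and let $x_\ell$ be a target element. Suppose the search accesses the sequence only through comparisons with $x_\ell$, and each comparison independently gives the wrong answer with probability at most a fixed constant less than $1/2$. Then for every constant $Q<1/2$ one can find an index $r$ with $\ell\le r\le 2\ell$, with probability at least $1-Q$, using $O(\lg(\ell/Q))$ comparisons.
   Context: This is the noisy exponential search problem: the goal is to locate $x_\ell$ up to a factor-two overshoot, in the style of exponential search, when comparisons are unreliable. *)

theory Defs
  imports "HOL-Probability.Probability"
begin

text \<open>A deterministic adaptive search strategy: given the list of answers received so far,
  it either queries an index (Inl i: compare x_i with the target x_l) or stops and
  outputs an index (Inr r). A randomized algorithm is a pmf over such strategies.\<close>
type_synonym strategy = "bool list \<Rightarrow> nat + nat"

text \<open>Execution with a budget of at most n comparisons. The target has index l; the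
  correct answer to query i is "x_i is at or beyond the target x_l", i.e. l \<le> i.
  The k-th comparison (k = number of earlier comparisons), on index i, is independently
  wrong with probability err k i. Result Some r: stopped with output r after at most
  n comparisons; None: budget exhausted.\<close>
fun exec :: "nat \<Rightarrow> strategy \<Rightarrow> nat \<Rightarrow> (nat \<Rightarrow> nat \<Rightarrow> real) \<Rightarrow> bool list \<Rightarrow> nat option pmf" where
  "exec 0 s l err h = (case s h of Inr r \<Rightarrow> return_pmf (Some r) | Inl i \<Rightarrow> return_pmf None)"
| "exec (Suc n) s l err h = (case s h of
      Inr r \<Rightarrow> return_pmf (Some r)
    | Inl i \<Rightarrow> bind_pmf (bernoulli_pmf (err (length h) i))
                 (\<lambda>flip. exec n s l err (h @ [(l \<le> i) \<noteq> flip])))"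

definition success_prob :: "strategy pmf \<Rightarrow> nat \<Rightarrow> nat \<Rightarrow> (nat \<Rightarrow> nat \<Rightarrow> real) \<Rightarrow> real" where
  "success_prob A n l err =
     measure_pmf.prob (bind_pmf A (\<lambda>s. exec n s l err []))
       {Some r | r. l \<le> r \<and> r \<le> 2 * l}"

end

theory Submission
  imports Defs
begin

lemma prob_bind_pmf: "measure_pmf.prob (bind_pmf M f) A = (\<integral>x. measure_pmf.prob (f x) A \<partial>measure_pmf M)"
  unfolding measure_pmf_bind
  by (auto simp: measure_pmf.measure_bind[where N="count_space UNIV"] measure_subprob)

fun blk :: "(nat \<Rightarrow> nat \<Rightarrow> real) \<Rightarrow> nat \<Rightarrow> nat \<Rightarrow> nat \<Rightarrow> nat \<Rightarrow> bool list pmf" where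
  "blk err l i 0 k = return_pmf []"
| "blk err l i (Suc m) k = bind_pmf (bernoulli_pmf (err k i))
      (\<lambda>f. map_pmf (\<lambda>b. ((l \<le> i) \<noteq> f) # b) (blk err l i m (Suc k)))"

lemma exec_Inr: "s h = Inr r \<Longrightarrow> exec n s l err h = return_pmf (Some r)"
  by (cases n) auto

lemma exec_block:
  assumes "\<And>b'. length b' < m \<Longrightarrow> s (h @ b') = Inl i"
  shows "exec (m + n) s l err h = bind_pmf (blk err l i m (length h)) (\<lambda>b. exec n s l err (h @ b))"
  using assms
proof (induction m arbitrary: h)
  case 0
  then show ?case by (simp add: bind_return_pmf)
next
  case (Suc m)
  have si: "s h = Inl i" using Suc.prems[of "[]"] by simp
  have IH: "exec (m + n) s l err (h @ [a]) = bind_pmf (blk err l i m (Suc (length h))) (\<lambda>b. exec n s l err (h @ a # b))" for a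
    using Suc.IH[of "h @ [a]"] Suc.prems[of "a # _"] by simp
  show ?case
    by (simp add: si IH bind_assoc_pmf bind_map_pmf)
qed

lemma blk_length: "b \<in> set_pmf (blk err l i m k) \<Longrightarrow> length b = m"
  by (induction m arbitrary: k b) auto

definition wcount :: "bool \<Rightarrow> bool list \<Rightarrow> nat" where
  "wcount t b = length (filter (\<lambda>x. x \<noteq> t) b)"

lemma blk_count:
  assumes err: "\<And>k. 0 \<le> err k i \<and> err k i \<le> p" and th: "1 \<le> \<theta>" and p1: "p \<le> 1"
  shows "measure_pmf.prob (blk err l i m k) {b. q \<le> wcount (l \<le> i) b} \<le> (1 - p + p * \<theta>) ^ m / \<theta> ^ q"
proof (induction m arbitrary: k q)
  case 0
  then show ?case using th by (cases q) (auto simp: wcount_def)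
next
  case (Suc m)
  define t where "t = (l \<le> i)"
  define e where "e = err k i"
  define X where "X = 1 - p + p * \<theta>"
  have e0: "0 \<le> e" and ep: "e \<le> p" using err[of k] by (auto simp: e_def)
  have e1: "e \<le> 1" using ep p1 by simp
  have X1: "1 \<le> X" proof -
    have "0 \<le> p * (\<theta> - 1)" using th ep e0 by simp
    then show ?thesis by (simp add: X_def algebra_simps)
  qed
  let ?P = "\<lambda>q. measure_pmf.prob (blk err l i m (Suc k)) {b. q \<le> wcount t b}"
  have T: "measure_pmf.prob (map_pmf (\<lambda>b. (t \<noteq> True) # b) (blk err l i m (Suc k))) {b. q \<le> wcount t b} = ?P (q - 1)"
  proof -
    have "(\<lambda>b. (t \<noteq> True) # b) -` {b. q \<le> wcount t b} = {b. q - 1 \<le> wcount t b}"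
      by (auto simp: wcount_def)
    then show ?thesis by (simp only: measure_map_pmf)
  qed
  have F: "measure_pmf.prob (map_pmf (\<lambda>b. (t \<noteq> False) # b) (blk err l i m (Suc k))) {b. q \<le> wcount t b} = ?P q"
  proof -
    have "(\<lambda>b. (t \<noteq> False) # b) -` {b. q \<le> wcount t b} = {b. q \<le> wcount t b}"
      by (auto simp: wcount_def)
    then show ?thesis by (simp only: measure_map_pmf)
  qed
  have lhs: "measure_pmf.prob (blk err l i (Suc m) k) {b. q \<le> wcount (l \<le> i) b} = e * ?P (q - 1) + (1 - e) * ?P q"
  proof -
    have "measure_pmf.prob (blk err l i (Suc m) k) {b. q \<le> wcount (l \<le> i) b}
      = (\<integral>f. measure_pmf.prob (map_pmf (\<lambda>b. (t \<noteq> f) # b) (blk err l i m (Suc k))) {b. q \<le> wcount t b} \<partial>measure_pmf (bernoulli_pmf e))"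
      by (simp only: blk.simps prob_bind_pmf t_def e_def)
    also have "\<dots> = measure_pmf.prob (map_pmf (\<lambda>b. (t \<noteq> True) # b) (blk err l i m (Suc k))) {b. q \<le> wcount t b} * e
        + measure_pmf.prob (map_pmf (\<lambda>b. (t \<noteq> False) # b) (blk err l i m (Suc k))) {b. q \<le> wcount t b} * (1 - e)"
      using e0 e1 by (rule integral_bernoulli_pmf)
    finally show ?thesis by (simp only: T F mult.commute)
  qed
  have a: "?P (q - 1) \<le> X ^ m * \<theta> / \<theta> ^ q"
  proof -
    have "?P (q - 1) \<le> X ^ m / \<theta> ^ (q - 1)" using Suc.IH unfolding X_def t_def by blast
    also have "\<dots> \<le> X ^ m * \<theta> / \<theta> ^ q"
    proof (cases q)
      case 0 then show ?thesis using th X1 by simp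
    next
      case (Suc q') then show ?thesis using th X1 by simp
    qed
    finally show ?thesis .
  qed
  have b: "?P q \<le> X ^ m / \<theta> ^ q" using Suc.IH unfolding X_def t_def by blast
  have "e * ?P (q - 1) + (1 - e) * ?P q \<le> e * (X ^ m * \<theta> / \<theta> ^ q) + (1 - e) * (X ^ m / \<theta> ^ q)"
    using a b e0 e1 by (intro add_mono mult_left_mono) auto
  also have "\<dots> = (X ^ m / \<theta> ^ q) * (1 + e * (\<theta> - 1))"
  proof -
    have "\<theta> \<noteq> 0" using th by simp
    then show ?thesis by (simp add: field_simps)
  qed
  also have "\<dots> \<le> (X ^ m / \<theta> ^ q) * X"
  proof -
    have "e * (\<theta> - 1) \<le> p * (\<theta> - 1)" using ep th by (intro mult_right_mono) auto
    then have "1 + e * (\<theta> - 1) \<le> X" by (simp add: X_def algebra_simps)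
    moreover have "0 \<le> X ^ m / \<theta> ^ q" using X1 th by simp
    ultimately show ?thesis by (rule mult_left_mono)
  qed
  finally show ?case using lhs by (simp add: X_def mult.commute)
qed

datatype wst = Run nat nat bool | Stop nat

definition TT :: "nat \<Rightarrow> nat \<Rightarrow> nat" where "TT t0 j = 2*j + t0 + 2"

fun wstep :: "nat \<Rightarrow> wst \<Rightarrow> bool \<Rightarrow> wst" where
  "wstep t0 (Run j c False) a = (if \<not> a then Run j c True else if 0 < c then Run j (c-1) False else Run (j-1) 0 False)"
| "wstep t0 (Run j c True) a = (if a then (if TT t0 j \<le> c + 1 then Stop (2^j) else Run j (c+1) False)
      else if 0 < c then Run j (c-1) False else Run (j+1) 0 False)"
| "wstep t0 (Stop r) a = Stop r"

fun qidx :: "wst \<Rightarrow> nat" where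
  "qidx (Run j c ph) = (if ph then 2^j else 2^j div 2)"
| "qidx (Stop r) = 0"

fun valid :: "nat \<Rightarrow> wst \<Rightarrow> bool" where
  "valid t0 (Run j c ph) = (c < TT t0 j)"
| "valid t0 (Stop r) = True"

fun Dp :: "nat \<Rightarrow> nat \<Rightarrow> nat \<Rightarrow> wst \<Rightarrow> nat" where
  "Dp J t0 l (Run j c ph) = (if j = J then 2*(TT t0 J - c) - (if ph then 1 else 0)
     else if j < J then 2*(J-j) + 2*TT t0 J + 2*c - (if ph then 1 else 0)
     else (j - J) + 2*TT t0 J + c + (if ph then 2 else 0))"
| "Dp J t0 l (Stop r) = (if l \<le> r \<and> r \<le> 2*l then 0 else 2*J + 2*TT t0 J + t0)"

lemma valid_step: "valid t0 s \<Longrightarrow> valid t0 (wstep t0 s a)"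
  by (cases "(t0, s, a)" rule: wstep.cases) (auto simp: TT_def)

lemma Dp_Stop_le: "Dp J t0 l (Stop r) \<le> 2*J + 2*TT t0 J + t0"
  by simp

lemma step_pot:
  assumes HB: "\<And>j. (l \<le> 2^j) = (J \<le> j)" and HA: "\<And>j. (l \<le> 2^j div 2) = (J < j)"
    and HG: "l \<le> 2^J \<and> 2^J \<le> 2*l"
    and v: "valid t0 (Run j c ph)"
  shows "Dp J t0 l (wstep t0 (Run j c ph) (l \<le> qidx (Run j c ph))) + 1 \<le> Dp J t0 l (Run j c ph)"
    and "Dp J t0 l (wstep t0 (Run j c ph) (\<not> (l \<le> qidx (Run j c ph)))) \<le> Dp J t0 l (Run j c ph) + 3"
proof -
  have "Dp J t0 l (wstep t0 (Run j c ph) (l \<le> qidx (Run j c ph))) + 1 \<le> Dp J t0 l (Run j c ph)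
     \<and> Dp J t0 l (wstep t0 (Run j c ph) (\<not> (l \<le> qidx (Run j c ph)))) \<le> Dp J t0 l (Run j c ph) + 3"
  proof (cases ph)
    case True
    then show ?thesis using v HB[of j] HG by (auto simp: TT_def)
  next
    case False
    then show ?thesis using v HA[of j] by (auto simp: TT_def)
  qed
  then show "Dp J t0 l (wstep t0 (Run j c ph) (l \<le> qidx (Run j c ph))) + 1 \<le> Dp J t0 l (Run j c ph)"
    and "Dp J t0 l (wstep t0 (Run j c ph) (\<not> (l \<le> qidx (Run j c ph)))) \<le> Dp J t0 l (Run j c ph) + 3"
    by auto
qed

definition maj :: "bool list \<Rightarrow> bool" where "maj b = (length b < 2 * length (filter id b))"

definition macro :: "nat \<Rightarrow> bool list \<Rightarrow> bool list" where
  "macro m h = map (\<lambda>k. maj (take m (drop (k*m) h))) [0..<length h div m]"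

definition wstate :: "nat \<Rightarrow> bool list \<Rightarrow> wst" where
  "wstate t0 H = foldl (wstep t0) (Run 0 0 False) H"

fun wout :: "wst \<Rightarrow> nat + nat" where
  "wout (Run j c ph) = Inl (qidx (Run j c ph))"
| "wout (Stop r) = Inr r"

definition strat :: "nat \<Rightarrow> nat \<Rightarrow> bool list \<Rightarrow> nat + nat" where
  "strat m t0 h = wout (wstate t0 (macro m h))"

lemma maj_wrong:
  assumes "length b = 2*a+1" "maj b \<noteq> t"
  shows "a + 1 \<le> wcount t b"
proof -
  have "length (filter id b) + length (filter (\<lambda>x. \<not> id x) b) = length b"
    by (rule sum_length_filter_compl)
  moreover have "filter (\<lambda>x. \<not> id x) b = filter (\<lambda>x. x \<noteq> True) b" by (induction b) auto
  moreover have "filter id b = filter (\<lambda>x. x \<noteq> False) b" by (induction b) auto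
  ultimately show ?thesis using assms by (cases t) (auto simp: maj_def wcount_def)
qed

lemma take_drop_app:
  assumes "i*m + m \<le> length h"
  shows "take m (drop (i*m) (h @ b)) = take m (drop (i*m) h)"
  using assms by (simp add: drop_append take_append)

lemma macro_short:
  assumes "0 < m" "m dvd length h" "length b < m"
  shows "macro m (h @ b) = macro m h"
proof -
  obtain k where k: "length h = k*m" using assms(2) by (auto simp: dvd_def mult.commute)
  have d: "length (h @ b) div m = k" using assms k by simp
  have d2: "length h div m = k" using assms k by simp
  have "i*m + m \<le> length h" if "i < k" for i
  proof -
    have "(i+1)*m \<le> k*m" using that by (intro mult_right_mono) auto
    then show ?thesis using k by simp
  qed
  then have "map (\<lambda>i. maj (take m (drop (i*m) (h @ b)))) [0..<k] = map (\<lambda>i. maj (take m (drop (i*m) h))) [0..<k]"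
    by (intro map_cong refl) (simp only: take_drop_app set_upt atLeastLessThan_iff)
  then show ?thesis unfolding macro_def d d2 by simp
qed

lemma macro_snoc:
  assumes "0 < m" "m dvd length h" "length b = m"
  shows "macro m (h @ b) = macro m h @ [maj b]"
proof -
  obtain k where k: "length h = k*m" using assms(2) by (auto simp: dvd_def mult.commute)
  have d: "length (h @ b) div m = Suc k" using assms k by simp
  have d2: "length h div m = k" using assms k by simp
  have "i*m + m \<le> length h" if "i < k" for i
  proof -
    have "(i+1)*m \<le> k*m" using that by (intro mult_right_mono) auto
    then show ?thesis using k by simp
  qed
  moreover have "take m (drop (k*m) (h @ b)) = b" using k assms by simp
  moreover have "map (\<lambda>i. maj (take m (drop (i*m) (h @ b)))) [0..<k] = map (\<lambda>i. maj (take m (drop (i*m) h))) [0..<k]"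
    using calculation(1) by (intro map_cong refl) (simp only: take_drop_app set_upt atLeastLessThan_iff)
  ultimately show ?thesis unfolding macro_def d d2 by simp
qed

lemma wstate_snoc: "wstate t0 (H @ [a]) = wstep t0 (wstate t0 H) a"
  by (simp add: wstate_def)

lemma finite_blk: "finite (set_pmf (blk err l i m k))"
  by (induction m arbitrary: k) auto

definition Good :: "nat \<Rightarrow> nat option set" where
  "Good l = {Some r | r. l \<le> r \<and> r \<le> 2 * l}"

lemma strat_stop:
  assumes "wstate t0 (macro m h) = Stop r0"
  shows "measure_pmf.prob (exec n (strat m t0) l err h) (- Good l) = (if l \<le> r0 \<and> r0 \<le> 2*l then 0 else 1)"
proof -
  have "strat m t0 h = Inr r0" using assms by (simp add: strat_def)
  then have "exec n (strat m t0) l err h = return_pmf (Some r0)" by (rule exec_Inr)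
  then show ?thesis by (auto simp: Good_def)
qed

lemma main:
  fixes l J t0 m :: nat and err :: "nat \<Rightarrow> nat \<Rightarrow> real"
  assumes m0: "0 < m"
    and HB: "\<And>j. (l \<le> 2^j) = (J \<le> j)" and HA: "\<And>j. (l \<le> 2^j div 2) = (J < j)"
    and HG: "l \<le> 2^J \<and> 2^J \<le> 2*l"
    and eb: "\<And>k i. measure_pmf.prob (blk err l i m k) {b. maj b \<noteq> (l \<le> i)} \<le> 1/32"
  shows "m dvd length h \<Longrightarrow> valid t0 (wstate t0 (macro m h)) \<Longrightarrow>
     measure_pmf.prob (exec (m*n + r) (strat m t0) l err h) (- Good l)
       \<le> 2 ^ Dp J t0 l (wstate t0 (macro m h)) * ((3/4)^n + 1 / 2 ^ (2*J + 2*TT t0 J + t0))"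
proof (induction n arbitrary: h)
  case 0
  define \<sigma> where "\<sigma> = wstate t0 (macro m h)"
  define Z :: real where "Z = 1 / 2 ^ (2*J + 2*TT t0 J + t0)"
  have Z0: "0 \<le> Z" by (simp add: Z_def)
  show ?case
  proof (cases \<sigma>)
    case (Stop r0)
    show ?thesis
    proof (cases "l \<le> r0 \<and> r0 \<le> 2*l")
      case True then show ?thesis using Stop strat_stop[of t0 m h r0] by (simp add: \<sigma>_def)
    next
      case False
      have "(1::real) \<le> 2 ^ (2*J + 2*TT t0 J + t0) * (1 + Z)"
        by (simp add: Z_def distrib_left)
      then show ?thesis using False Stop strat_stop[of t0 m h r0] by (simp add: \<sigma>_def Z_def)
    qed
  next
    case (Run j c ph)
    have "measure_pmf.prob (exec (m*0 + r) (strat m t0) l err h) (- Good l) \<le> 1" by simp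
    also have "(1::real) \<le> 2 ^ Dp J t0 l \<sigma> * (1 + Z)"
    proof -
      have "1 \<le> (2::real) ^ Dp J t0 l \<sigma>" by (rule one_le_power) simp
      moreover have "0 \<le> (2::real) ^ Dp J t0 l \<sigma> * Z" using Z0 by simp
      ultimately show ?thesis unfolding distrib_left mult_1_right by linarith
    qed
    finally show ?thesis by (simp add: \<sigma>_def Z_def)
  qed
next
  case (Suc n)
  define \<sigma> where "\<sigma> = wstate t0 (macro m h)"
  define Z :: real where "Z = 1 / 2 ^ (2*J + 2*TT t0 J + t0)"
  define R :: real where "R = (3/4)^n + Z"
  have Z0: "0 \<le> Z" by (simp add: Z_def)
  have R0: "0 \<le> R" using Z0 by (simp add: R_def)
  show ?case
  proof (cases \<sigma>)
    case (Stop r0)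
    show ?thesis
    proof (cases "l \<le> r0 \<and> r0 \<le> 2*l")
      case True then show ?thesis using Stop strat_stop[of t0 m h r0] by (simp add: \<sigma>_def)
    next
      case False
      have one: "(1::real) \<le> 2 ^ (2*J + 2*TT t0 J + t0) * ((3/4)^Suc n + Z)"
      proof -
        have "(1::real) = 2 ^ (2*J + 2*TT t0 J + t0) * Z" by (simp add: Z_def)
        moreover have "(0::real) \<le> 2 ^ (2*J + 2*TT t0 J + t0) * (3/4)^Suc n" by simp
        ultimately show ?thesis unfolding distrib_left by linarith
      qed
      have p1: "measure_pmf.prob (exec (m * Suc n + r) (strat m t0) l err h) (- Good l) = 1"
        using False Stop strat_stop[of t0 m h r0] by (simp add: \<sigma>_def)
      have dp: "Dp J t0 l \<sigma> = 2*J + 2*TT t0 J + t0" unfolding Stop by (simp only: Dp.simps if_not_P[OF False])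
      show ?thesis unfolding \<sigma>_def[symmetric] p1 dp using one by (simp only: Z_def)
    qed
  next
    case (Run j c ph)
    define i where "i = qidx \<sigma>"
    define t where "t = (l \<le> i)"
    define D where "D = Dp J t0 l \<sigma>"
    define E where "E = {b. maj b \<noteq> t}"
    define A :: real where "A = 2 ^ D / 2 * R"
    define B :: real where "B = 2 ^ D * 8 * R"
    have vs: "valid t0 \<sigma>" using Suc.prems by (simp add: \<sigma>_def)
    have si: "strat m t0 (h @ b') = Inl i" if "length b' < m" for b'
      using macro_short[OF m0 Suc.prems(1) that] Run by (simp add: strat_def i_def \<sigma>_def)
    have ex: "exec (m * Suc n + r) (strat m t0) l err h
       = bind_pmf (blk err l i m (length h)) (\<lambda>b. exec (m*n + r) (strat m t0) l err (h @ b))"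
      using exec_block[of m "strat m t0" h i "m*n + r" l err] si by (simp add: add.assoc)
    have pt: "Dp J t0 l (wstep t0 \<sigma> t) + 1 \<le> D" "Dp J t0 l (wstep t0 \<sigma> (\<not> t)) \<le> D + 3"
      using step_pot[OF HB HA HG, of t0 j c ph] vs Run by (auto simp: t_def i_def D_def)
    have bnd: "measure_pmf.prob (exec (m*n + r) (strat m t0) l err (h @ b)) (- Good l)
        \<le> A + (B - A) * indicator E b" if b: "b \<in> set_pmf (blk err l i m (length h))" for b
    proof -
      have lb: "length b = m" using blk_length[OF b] .
      have mac: "macro m (h @ b) = macro m h @ [maj b]" using macro_snoc[OF m0 Suc.prems(1) lb] .
      have ws: "wstate t0 (macro m (h @ b)) = wstep t0 \<sigma> (maj b)"
        by (simp add: mac wstate_snoc \<sigma>_def)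
      have dv: "m dvd length (h @ b)" using Suc.prems(1) lb by simp
      have IH: "measure_pmf.prob (exec (m*n + r) (strat m t0) l err (h @ b)) (- Good l)
         \<le> 2 ^ Dp J t0 l (wstep t0 \<sigma> (maj b)) * R"
        using Suc.IH[OF dv] valid_step[OF vs] ws by (simp add: R_def Z_def)
      show ?thesis
      proof (cases "maj b = t")
        case True
        have "(2::real) ^ Dp J t0 l (wstep t0 \<sigma> (maj b)) * 2 \<le> 2 ^ D"
        proof -
          have "(2::real) ^ Dp J t0 l (wstep t0 \<sigma> (maj b)) * 2 = 2 ^ (Dp J t0 l (wstep t0 \<sigma> t) + 1)"
            using True by simp
          also have "\<dots> \<le> 2 ^ D" using pt(1) by (intro power_increasing) auto
          finally show ?thesis .
        qed
        then have "(2::real) ^ Dp J t0 l (wstep t0 \<sigma> (maj b)) * R \<le> A"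
          unfolding A_def using R0 by (simp add: field_simps mult_left_mono)
        then show ?thesis using IH True by (simp add: E_def)
      next
        case False
        then have mb: "maj b = (\<not> t)" by auto
        have "(2::real) ^ Dp J t0 l (wstep t0 \<sigma> (maj b)) \<le> 2 ^ (D + 3)"
          using pt(2) mb by (intro power_increasing) auto
        then have "(2::real) ^ Dp J t0 l (wstep t0 \<sigma> (maj b)) * R \<le> B"
          unfolding B_def using R0 by (simp add: mult_right_mono power_add)
        then show ?thesis using IH False by (simp add: E_def)
      qed
    qed
    have fin: "finite (set_pmf (blk err l i m (length h)))" by (rule finite_blk)
    have "measure_pmf.prob (exec (m * Suc n + r) (strat m t0) l err h) (- Good l)
        = (\<integral>b. measure_pmf.prob (exec (m*n + r) (strat m t0) l err (h @ b)) (- Good l) \<partial>measure_pmf (blk err l i m (length h)))"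
      by (simp only: ex prob_bind_pmf)
    also have "\<dots> \<le> (\<integral>b. A + (B - A) * indicator E b \<partial>measure_pmf (blk err l i m (length h)))"
      using bnd by (intro integral_mono_AE integrable_measure_pmf_finite[OF fin]) (auto simp: AE_measure_pmf_iff)
    also have "\<dots> = A + (B - A) * measure_pmf.prob (blk err l i m (length h)) E"
    proof -
      let ?M = "measure_pmf (blk err l i m (length h))"
      have i1: "integrable ?M (\<lambda>b. A)" by (rule integrable_measure_pmf_finite[OF fin])
      have i2: "integrable ?M (\<lambda>b. (B - A) * indicator E b)" by (rule integrable_measure_pmf_finite[OF fin])
      have "(\<integral>b. A + (B - A) * indicator E b \<partial>?M) = (\<integral>b. A \<partial>?M) + (\<integral>b. (B - A) * indicator E b \<partial>?M)"
        by (rule Bochner_Integration.integral_add[OF i1 i2])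
      then show ?thesis by simp
    qed
    also have "\<dots> \<le> A + (B - A) * (1/32)"
      using eb[of i "length h"] R0 unfolding E_def t_def A_def B_def
      by (intro add_left_mono mult_left_mono) auto
    also have "\<dots> = 2 ^ D * R * (47/64)" by (simp add: A_def B_def field_simps)
    also have "\<dots> \<le> 2 ^ D * ((3/4) ^ Suc n + Z)"
      using Z0 by (simp add: R_def field_simps)
    finally show ?thesis by (simp add: D_def \<sigma>_def Z_def)
  qed
qed

lemma Jfacts:
  fixes l :: nat
  assumes l1: "1 \<le> l"
  defines "J \<equiv> LEAST j. l \<le> 2^j"
  shows "\<And>j. (l \<le> 2^j) = (J \<le> j)" and "\<And>j. (l \<le> 2^j div 2) = (J < j)"
    and "l \<le> 2^J \<and> 2^J \<le> 2*l" and "real J \<le> log 2 l + 1"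
proof -
  have ex: "l \<le> 2^l" using less_exp[of l] by simp
  have lJ: "l \<le> 2^J" unfolding J_def by (rule LeastI[of _ l]) (rule ex)
  have Jle: "J \<le> j" if "l \<le> 2^j" for j unfolding J_def by (rule Least_le) (rule that)
  show HB: "(l \<le> 2^j) = (J \<le> j)" for j
  proof
    assume "J \<le> j"
    then have "(2::nat)^J \<le> 2^j" by (intro power_increasing) auto
    then show "l \<le> 2^j" by (rule order_trans[OF lJ])
  qed (rule Jle)
  show "(l \<le> 2^j div 2) = (J < j)" for j
  proof (cases j)
    case 0 then show ?thesis using l1 by simp
  next
    case (Suc j') then show ?thesis using HB[of j'] by (simp add: less_Suc_eq_le)
  qed
  have lt: "2^J' < l" if "J = Suc J'" for J'
    using HB[of J'] that by simp
  show "l \<le> 2^J \<and> 2^J \<le> 2*l"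
  proof (cases J)
    case 0 then show ?thesis using lJ l1 by simp
  next
    case (Suc J') then show ?thesis using lt[OF Suc] lJ by simp
  qed
  show "real J \<le> log 2 l + 1"
  proof (cases J)
    case 0
    have "0 \<le> log 2 (real l)" using l1 by simp
    then show ?thesis using 0 by simp
  next
    case (Suc J')
    have "real (2^J') < real l" using lt[OF Suc] by (simp only: of_nat_less_iff)
    then have "2 powr (real J') < real l" by (simp add: powr_realpow)
    then have "real J' < log 2 l" using l1 by (subst less_log_iff) auto
    then show ?thesis using Suc by simp
  qed
qed

lemma maj_err:
  assumes err: "\<And>k. 0 \<le> err k i \<and> err k i \<le> q"
    and q1: "1/4 \<le> q" and q2: "q < 1/2"
    and ba: "(4*q*(1-q))^a \<le> 1/32"
  shows "measure_pmf.prob (blk err l i (2*a+1) k) {b. maj b \<noteq> (l \<le> i)} \<le> 1/32"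
proof -
  define \<theta> where "\<theta> = (1-q)/q"
  define X where "X = 1 - q + q * \<theta>"
  have qpos: "0 < q" using q1 by simp
  have th1: "1 \<le> \<theta>" using q2 qpos by (simp add: \<theta>_def field_simps)
  have Xe: "X = 2*(1-q)" using qpos by (simp add: X_def \<theta>_def)
  let ?M = "blk err l i (2*a+1) k"
  have "measure_pmf.prob ?M {b. maj b \<noteq> (l \<le> i)} = measure_pmf.prob ?M ({b. maj b \<noteq> (l \<le> i)} \<inter> set_pmf ?M)"
    by (rule measure_Int_set_pmf[symmetric])
  also have "\<dots> \<le> measure_pmf.prob ?M {b. a + 1 \<le> wcount (l \<le> i) b}"
  proof -
    have sub: "{b. maj b \<noteq> (l \<le> i)} \<inter> set_pmf ?M \<subseteq> {b. a + 1 \<le> wcount (l \<le> i) b}"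
    proof
      fix b assume b: "b \<in> {b. maj b \<noteq> (l \<le> i)} \<inter> set_pmf ?M"
      then have "length b = 2*a+1" using blk_length by blast
      moreover have "maj b \<noteq> (l \<le> i)" using b by blast
      ultimately show "b \<in> {b. a + 1 \<le> wcount (l \<le> i) b}" using maj_wrong by blast
    qed
    show ?thesis by (rule measure_pmf.finite_measure_mono[OF sub]) simp
  qed
  also have "\<dots> \<le> X ^ (2*a+1) / \<theta> ^ (a+1)"
    unfolding X_def by (rule blk_count) (use err th1 q2 in auto)
  also have "\<dots> = (X / \<theta>) * (X^2 / \<theta>) ^ a"
  proof -
    have e1: "X ^ (2*a+1) = (X^2)^a * X" by (simp only: power_add power_mult power_one_right)
    have e2: "\<theta> ^ (a+1) = \<theta>^a * \<theta>" by (simp only: power_add power_one_right)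
    have e3: "(X^2 / \<theta>) ^ a = (X^2)^a / \<theta>^a" by (rule power_divide)
    have tn: "\<theta> \<noteq> 0" using th1 by simp
    show ?thesis unfolding e1 e2 e3 using tn by (simp add: mult.commute)
  qed
  also have "X / \<theta> = 2 * q"
  proof -
    have "1 - q \<noteq> 0" "q \<noteq> 0" using qpos q2 by auto
    then show ?thesis unfolding Xe \<theta>_def by (simp add: divide_simps)
  qed
  also have "X^2 / \<theta> = 4*q*(1-q)"
  proof -
    have "1 - q \<noteq> 0" "q \<noteq> 0" using qpos q2 by auto
    then show ?thesis unfolding Xe \<theta>_def power2_eq_square by (simp add: divide_simps algebra_simps)
  qed
  also have "2 * q * (4*q*(1-q))^a \<le> 1 * (1/32)"
    using q2 qpos ba by (intro mult_mono) auto
  finally show ?thesis by simp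
qed

lemma final_arith:
  fixes J t0 n :: nat and L M x :: real
  assumes "real J \<le> L + 1" "real t0 \<le> M + 2" "1 \<le> M" "0 \<le> L" "x = L + M" "70*x - 2 \<le> real n"
  shows "6*J + 3*t0 + 4 \<le> 2*(n div 5)"
proof -
  have "real n < 5 * (real (n div 5) + 1)"
  proof -
    have "n mod 5 < 5" by simp
    then have "n < 5 * (n div 5 + 1)" by presburger
    then have "real n < real (5 * (n div 5 + 1))" by (simp only: of_nat_less_iff)
    then show ?thesis by simp
  qed
  then have "6 * real J + 3 * real t0 + 4 \<le> 2 * real (n div 5)" using assms by linarith
  then have "real (6*J + 3*t0 + 4) \<le> real (2*(n div 5))" by simp
  then show ?thesis by (simp only: of_nat_le_iff)
qed

lemma prob_good: "measure_pmf.prob M A = 1 - measure_pmf.prob M (-A)"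
proof -
  have "UNIV - (UNIV - A) = A" by auto
  then show ?thesis using measure_pmf.prob_compl[of "-A" M] by (simp add: Compl_eq_Diff_UNIV)
qed

theorem lemma3:
  fixes p :: real
  assumes "0 \<le> p" and "p < 1/2"
  shows "\<exists>C>0. \<forall>Q::real. 0 < Q \<and> Q < 1/2 \<longrightarrow>
           (\<exists>A :: strategy pmf. \<forall>l::nat. \<forall>err :: nat \<Rightarrow> nat \<Rightarrow> real.
              1 \<le> l \<and> (\<forall>k i. 0 \<le> err k i \<and> err k i \<le> p) \<longrightarrow>
              success_prob A (nat \<lfloor>C * log 2 (real l / Q)\<rfloor>) l err \<ge> 1 - Q)"
proof -
  define q where "q = max p (1/4)"
  have q1: "1/4 \<le> q" and q2: "q < 1/2" and pq: "p \<le> q" using assms by (auto simp: q_def)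
  have "4*q*(1-q) = 1 - (1-2*q)^2" by (simp add: power2_eq_square algebra_simps)
  moreover have "0 < (1-2*q)^2" using q2 by simp
  ultimately have b1: "4*q*(1-q) < 1" by linarith
  have "\<exists>a. (4*q*(1-q))^a < 1/32" by (rule real_arch_pow_inv) (simp, rule b1)
  then obtain a where ba: "(4*q*(1-q))^a < 1/32" by blast
  define m where "m = 2*a+1"
  have m0: "0 < m" by (simp add: m_def)
  show ?thesis
  proof (intro exI[of _ "70 * real m"] conjI allI impI)
    show "0 < 70 * real m" using m0 by simp
    fix Q :: real assume Q: "0 < Q \<and> Q < 1/2"
    define t0 where "t0 = nat \<lceil>log 2 (2/Q)\<rceil>"
    define M where "M = - log 2 Q"
    have M1: "1 \<le> M"
    proof -
      have "log 2 Q < log 2 (1/2)" using Q by (subst log_less_cancel_iff) auto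
      moreover have "log 2 (1/2) = (-1::real)" by (simp add: log_divide)
      ultimately show ?thesis by (simp add: M_def)
    qed
    have l2Q: "log 2 (2/Q) = 1 + M" using Q by (simp add: log_divide M_def)
    have c0: "0 \<le> \<lceil>log 2 (2/Q)\<rceil>" using l2Q M1 by (simp add: ceiling_le_iff[symmetric])
    then have t0e: "real t0 = of_int \<lceil>log 2 (2/Q)\<rceil>" by (simp add: t0_def)
    have t0b: "real t0 \<le> M + 2"
    proof -
      have "real t0 = of_int \<lceil>log 2 (2/Q)\<rceil>" by (rule t0e)
      also have "\<dots> < log 2 (2/Q) + 1" using ceiling_correct[of "log 2 (2/Q)"] by linarith
      finally show ?thesis using l2Q by simp
    qed
    have t0Q: "1 / 2^t0 \<le> Q/2"
    proof -
      have "log 2 (2/Q) \<le> real t0" unfolding t0e by (rule le_of_int_ceiling)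
      then have "2 powr log 2 (2/Q) \<le> 2 powr real t0" by simp
      then have "2/Q \<le> 2^t0" using Q by (simp add: powr_realpow)
      then show ?thesis using Q by (simp add: field_simps)
    qed
    show "\<exists>A :: strategy pmf. \<forall>l::nat. \<forall>err :: nat \<Rightarrow> nat \<Rightarrow> real.
              1 \<le> l \<and> (\<forall>k i. 0 \<le> err k i \<and> err k i \<le> p) \<longrightarrow>
              success_prob A (nat \<lfloor>(70 * real m) * log 2 (real l / Q)\<rfloor>) l err \<ge> 1 - Q"
    proof (intro exI[of _ "return_pmf (strat m t0)"] allI impI)
      fix l :: nat and err :: "nat \<Rightarrow> nat \<Rightarrow> real"
      assume H: "1 \<le> l \<and> (\<forall>k i. 0 \<le> err k i \<and> err k i \<le> p)"
      have l1: "1 \<le> l" using H by simp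
      define J where "J = (LEAST j. l \<le> 2^j)"
      have HB: "\<And>j. (l \<le> 2^j) = (J \<le> j)" unfolding J_def by (rule Jfacts(1)[OF l1])
      have HA: "\<And>j. (l \<le> 2^j div 2) = (J < j)" unfolding J_def by (rule Jfacts(2)[OF l1])
      have HG: "l \<le> 2^J \<and> 2^J \<le> 2*l" unfolding J_def by (rule Jfacts(3)[OF l1])
      have JL: "real J \<le> log 2 l + 1" unfolding J_def by (rule Jfacts(4)[OF l1])
      define L where "L = log 2 (real l)"
      have L0: "0 \<le> L" using l1 by (simp add: L_def)
      define x where "x = log 2 (real l / Q)"
      have xLM: "x = L + M" using l1 Q by (simp add: x_def L_def M_def log_divide)
      define N where "N = nat \<lfloor>70 * real m * x\<rfloor>"
      define n where "n = N div m"
      define r where "r = N mod m"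
      have Nnr: "N = m*n + r" by (simp add: n_def r_def)
      have eb: "measure_pmf.prob (blk err l i m k) {b. maj b \<noteq> (l \<le> i)} \<le> 1/32" for k i
        unfolding m_def using H pq q1 q2 ba by (intro maj_err) (auto intro: order_trans)
      have mn: "measure_pmf.prob (exec (m*n + r) (strat m t0) l err []) (- Good l)
         \<le> 2 ^ Dp J t0 l (wstate t0 (macro m [])) * ((3/4)^n + 1 / 2 ^ (2*J + 2*TT t0 J + t0))"
        by (rule main[OF m0 HB HA HG eb]) (auto simp: macro_def wstate_def TT_def)
      define D0 where "D0 = 2*J + 2*TT t0 J"
      have D0e: "Dp J t0 l (wstate t0 (macro m [])) = D0"
        by (cases J) (auto simp: macro_def wstate_def D0_def)
      have nx: "70*x - 2 \<le> real n"
      proof -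
        have x0: "0 \<le> x" using xLM L0 M1 by simp
        have f1: "70 * (real m * x) - 1 < real N"
        proof -
          have "0 \<le> 70 * real m * x" using x0 by simp
          then have "real N = of_int \<lfloor>70 * real m * x\<rfloor>" by (simp add: N_def)
          moreover have "70 * real m * x - 1 < of_int \<lfloor>70 * real m * x\<rfloor>" by linarith
          ultimately show ?thesis by (simp add: mult.assoc)
        qed
        have "r < m" using m0 by (simp add: r_def)
        then have "N < m * n + m" using Nnr by linarith
        then have f2: "real N < real m * real n + real m" by (metis of_nat_add of_nat_less_iff of_nat_mult)
        have m1: "1 \<le> real m" using m0 by simp
        have "70 * (real m * x) - 2 * real m \<le> real m * real n" using f1 f2 m1 by linarith
        then have "real m * (70*x - 2) \<le> real m * real n" by (simp add: algebra_simps)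
        then show ?thesis using m1 by simp
      qed
      have key: "6*J + 3*t0 + 4 \<le> 2*(n div 5)"
        by (rule final_arith[OF JL[folded L_def] t0b M1 L0 xLM nx])
      have p34: "(3/4::real)^n \<le> 1 / 2^(2*(n div 5))"
      proof -
        have "(3/4::real)^n \<le> (3/4)^(5*(n div 5))" by (intro power_decreasing) auto
        also have "\<dots> = ((3/4)^5)^(n div 5)" by (simp add: power_mult)
        also have "\<dots> \<le> (1/4)^(n div 5)"
        proof (rule power_mono)
          show "(3/4::real)^5 \<le> 1/4" by (simp add: eval_nat_numeral)
        qed simp
        also have "\<dots> = 1 / 2^(2*(n div 5))" by (simp add: power_mult power_divide)
        finally show ?thesis .
      qed
      have part1: "2^D0 * (3/4::real)^n \<le> 1 / 2^t0"
      proof -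
        have "2^D0 * (3/4::real)^n \<le> 2^D0 * (1 / 2^(2*(n div 5)))" using p34 by (intro mult_left_mono) simp_all
        also have "\<dots> \<le> 1 / 2^t0"
        proof -
          have "D0 + t0 \<le> 2*(n div 5)" using key by (simp add: D0_def TT_def)
          then have "(2::real)^(D0 + t0) \<le> 2^(2*(n div 5))" by (intro power_increasing) auto
          then show ?thesis by (simp add: power_add field_simps)
        qed
        finally show ?thesis .
      qed
      have part2: "(2::real)^D0 * (1 / 2 ^ (2*J + 2*TT t0 J + t0)) = 1 / 2^t0"
        by (simp add: D0_def power_add)
      have fail: "measure_pmf.prob (exec N (strat m t0) l err []) (- Good l) \<le> Q"
      proof -
        have "measure_pmf.prob (exec N (strat m t0) l err []) (- Good l)
           \<le> 2^D0 * (3/4)^n + 2^D0 * (1 / 2 ^ (2*J + 2*TT t0 J + t0))"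
          using mn unfolding Nnr D0e by (simp add: distrib_left)
        also have "\<dots> \<le> 1/2^t0 + 1/2^t0" using part1 part2 by simp
        also have "\<dots> \<le> Q" using t0Q by simp
        finally show ?thesis .
      qed
      have "success_prob (return_pmf (strat m t0)) N l err = measure_pmf.prob (exec N (strat m t0) l err []) (Good l)"
        by (simp add: success_prob_def Good_def bind_return_pmf)
      also have "\<dots> = 1 - measure_pmf.prob (exec N (strat m t0) l err []) (- Good l)" by (rule prob_good)
      finally show "1 - Q \<le> success_prob (return_pmf (strat m t0)) (nat \<lfloor>(70 * real m) * log 2 (real l / Q)\<rfloor>) l err"
        using fail by (simp add: N_def x_def)
    qed
  qed
qed

end
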